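(* Let $H \in \mathbb{R}^{r \times n}_+$ be an entrywise nonnegative matrix satisfying the NC-SSC, i.e., $e - e_i \in \operatorname{cone}(H)$ for all $i \in \{1,\dots,r\}$. Define $$p^* = \max_{x \in \mathbb{R}^r} \|x\|_2 \ \text{ subject to } \ e^\top x = 1,\ H^\top x \ge 0,$$ and $$q^* = \max_{x \in \mathbb{R}^r} \|x\|_2 \ \text{ subject to } \ e^\top x = 1,\ H^\top x \ge 0,\ -1 \le x_i \le 1 \text{ for all } i.$$ Then $p^* = 1$ if and only if $q^* = 1$.
   Context: $e \in \mathbb{R}^r$ denotes the all-ones vector, $e_i$ the $i$-th standard unit vector of $\mathbb{R}^r$, $\|\cdot\|_2$ the Euclidean norm, and inequalities between vectors are entrywise. For $H \in \mathbb{R}^{r\times n}$, $\operatorname{cone}(H) = \{ Hy : y \in \mathbb{R}^n, y \ge 0\}$. The NC-SSC for $H$ means $\operatorname{cone}(ee^\top - I) \subseteq \operatorname{cone}(H)$, equivalently $e - e_i \in \operatorname{cone}(H)$ for all $i$. *)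

theory Defs
  imports "HOL-Analysis.Analysis"
begin

text \<open>Matrices H in R^{r x n} are rendered as real^'n^'r (rows indexed by 'r, columns by 'n).\<close>

definition ones :: "real^'r" where
  "ones = (\<chi> i. 1)"

definition matrix_cone :: "real^'n^'r \<Rightarrow> (real^'r) set" where
  "matrix_cone H = {H *v y | y. \<forall>j. y $ j \<ge> 0}"

definition nc_ssc :: "real^'n^'r \<Rightarrow> bool" where
  "nc_ssc H \<longleftrightarrow> (\<forall>i. ones - axis i 1 \<in> matrix_cone H)"

definition pstar :: "real^'n^'r \<Rightarrow> real" where
  "pstar H = Sup (norm ` {x :: real^'r. ones \<bullet> x = 1 \<and> (\<forall>j. (transpose H *v x) $ j \<ge> 0)})"

definition qstar :: "real^'n^'r \<Rightarrow> real" where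
  "qstar H = Sup (norm ` {x :: real^'r. ones \<bullet> x = 1 \<and> (\<forall>j. (transpose H *v x) $ j \<ge> 0)
                                      \<and> (\<forall>i. -1 \<le> x $ i \<and> x $ i \<le> 1)})"

end

theory Submission
  imports Defs
begin

lemma ones_inner: "ones \<bullet> (x::real^'r) = (\<Sum>i\<in>UNIV. x $ i)"
  by (simp add: ones_def inner_vec_def)

lemma le_one:
  fixes H :: "real^'n^'r"
  assumes "nc_ssc H" "ones \<bullet> x = 1" "\<forall>j. (transpose H *v x) $ j \<ge> 0"
  shows "x $ i \<le> 1"
proof -
  obtain y where y: "ones - axis i 1 = H *v y" "\<forall>j. y $ j \<ge> 0"
    using assms(1) unfolding nc_ssc_def matrix_cone_def by blast
  have "(H *v y) \<bullet> x = y \<bullet> (transpose H *v x)"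
    by (metis dot_lmul_matrix vector_transpose_matrix)
  also have "\<dots> = (\<Sum>j\<in>UNIV. y $ j * (transpose H *v x) $ j)" by (simp add: inner_vec_def)
  also have "\<dots> \<ge> 0" using y(2) assms(3) by (intro sum_nonneg) simp
  finally have "(ones - axis i 1) \<bullet> x \<ge> 0" using y(1) by simp
  then show ?thesis using assms(2) by (simp add: inner_diff_left inner_axis')
qed

lemma bdd:
  fixes H :: "real^'n^'r"
  assumes "nc_ssc H" "ones \<bullet> x = 1" "\<forall>j. (transpose H *v x) $ j \<ge> 0"
  shows "norm x \<le> 2 * real CARD('r) - 1"
proof -
  have "norm x \<le> (\<Sum>i\<in>UNIV. \<bar>x$i\<bar>)" by (rule norm_le_l1_cart)
  also have "\<dots> \<le> (\<Sum>i\<in>UNIV. 2 - x $ i)"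
    using le_one[OF assms] by (intro sum_mono) (smt (verit))
  also have "\<dots> = 2 * real CARD('r) - 1"
    using assms(2) by (simp add: sum_subtractf ones_inner)
  finally show ?thesis .
qed

lemma axis_in:
  fixes H :: "real^'n^'r"
  assumes "\<forall>i j. H $ i $ j \<ge> 0"
  shows "ones \<bullet> (axis k 1 :: real^'r) = 1 \<and> (\<forall>j. (transpose H *v axis k 1) $ j \<ge> 0)
     \<and> (\<forall>i. -1 \<le> (axis k 1 :: real^'r) $ i \<and> (axis k 1 :: real^'r) $ i \<le> 1)"
proof -
  have "ones \<bullet> (axis k 1 :: real^'r) = 1" by (simp add: ones_inner axis_def)
  moreover have "(transpose H *v axis k 1) $ j = H $ k $ j" for j
    by (simp add: matrix_vector_mult_def transpose_def axis_def if_distrib cong: if_cong)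
  ultimately show ?thesis using assms by (simp add: axis_def)
qed

theorem lemma3:
  fixes H :: "real^'n^'r"
  assumes "\<forall>i j. H $ i $ j \<ge> 0"
    and "nc_ssc H"
  shows "pstar H = 1 \<longleftrightarrow> qstar H = 1"
proof -
  define S where "S = {x :: real^'r. ones \<bullet> x = 1 \<and> (\<forall>j. (transpose H *v x) $ j \<ge> 0)}"
  define T where "T = {x :: real^'r. ones \<bullet> x = 1 \<and> (\<forall>j. (transpose H *v x) $ j \<ge> 0)
                                      \<and> (\<forall>i. -1 \<le> x $ i \<and> x $ i \<le> 1)}"
  have p: "pstar H = Sup (norm ` S)" unfolding pstar_def S_def ..
  have q: "qstar H = Sup (norm ` T)" unfolding qstar_def T_def ..
  have TS: "T \<subseteq> S" unfolding S_def T_def by blast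
  have bS: "bdd_above (norm ` S)"
    unfolding bdd_above_def S_def using bdd[OF assms(2)] by blast
  have bT: "bdd_above (norm ` T)" using bS TS by (meson bdd_above_mono image_mono)
  obtain k :: 'r where True by blast
  have aT: "axis k 1 \<in> T" using axis_in[OF assms(1)] unfolding T_def by blast
  have na: "norm (axis k 1 :: real^'r) = 1" by simp
  have q1: "qstar H \<ge> 1" unfolding q using aT bT na by (metis cSup_upper imageI)
  have p1: "pstar H \<ge> 1" unfolding p using aT TS bS na by (metis cSup_upper imageI subsetD)
  show ?thesis
  proof
    assume "pstar H = 1"
    have "qstar H \<le> 1" unfolding q
    proof (rule cSup_least)
      show "norm ` T \<noteq> {}" using aT by blast
    next
      fix v assume "v \<in> norm ` T"
      then show "v \<le> 1" using TS bS `pstar H = 1` unfolding p by (metis cSup_upper image_mono subsetD)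
    qed
    then show "qstar H = 1" using q1 by simp
  next
    assume qq: "qstar H = 1"
    have Tle: "norm z \<le> 1" if "z \<in> T" for z
      using that bT qq unfolding q by (metis cSup_upper imageI)
    show "pstar H = 1"
    proof (rule ccontr)
      assume "pstar H \<noteq> 1"
      then have "1 < Sup (norm ` S)" using p1 p by simp
      then obtain x where xS: "x \<in> S" and nx: "norm x > 1"
        using less_cSup_iff[OF _ bS] aT TS by fastforce
      have xle: "x $ i \<le> 1" for i using le_one[OF assms(2)] xS unfolding S_def by blast
      show False
      proof (cases "\<forall>i. -1 \<le> x $ i")
        case True
        then have "x \<in> T" using xS xle unfolding S_def T_def by blast
        then show False using Tle nx by fastforce
      next
        case False
        then obtain i0 where xi0: "x $ i0 < -1" by (auto simp: not_le)
        define m where "m = Min (range (\<lambda>i. x $ i))"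
        have "m \<in> range (\<lambda>i. x $ i)" unfolding m_def by (intro Min_in) auto
        then obtain i where im: "x $ i = m" by auto
        have xmin: "x $ i \<le> x $ j" for j unfolding im m_def by (intro Min_le) auto
        have xi: "x $ i < -1" using xmin[of i0] xi0 by simp
        have "\<exists>k. k \<noteq> i"
        proof (rule ccontr)
          assume "\<not> (\<exists>k. k \<noteq> i)"
          then have U: "UNIV = {i}" by blast
          have "ones \<bullet> x = x $ i" unfolding ones_inner U by simp
          then show False using xS xi unfolding S_def by simp
        qed
        then obtain k where ki: "k \<noteq> i" by blast
        define t where "t = -1 / x $ i"
        have t0: "0 < t" "t < 1" using xi unfolding t_def by (auto simp: field_simps)
        define y where "y = (1 - t) *\<^sub>R axis k 1 + t *\<^sub>R x"
        have ak: "ones \<bullet> (axis k 1 :: real^'r) = 1" "\<forall>j. (transpose H *v axis k 1) $ j \<ge> 0"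
          using axis_in[OF assms(1)] by blast+
        have ys1: "ones \<bullet> y = 1" using ak xS unfolding y_def S_def
          by (simp add: inner_add_right algebra_simps)
        have ys2: "\<forall>j. (transpose H *v y) $ j \<ge> 0"
          using ak xS t0 unfolding y_def S_def
          by (simp add: matrix_vector_right_distrib matrix_vector_mult_scaleR)
        have yle: "y $ j \<le> 1" for j using le_one[OF assms(2) ys1 ys2] .
        have yi: "y $ i = -1" using ki xi unfolding y_def t_def by (simp add: axis_def)
        have yge: "-1 \<le> y $ j" for j
        proof -
          have "t * x $ j \<ge> t * x $ i" using xmin t0 by (simp add: mult_left_mono)
          moreover have "t * x $ i = -1" using xi unfolding t_def by simp
          ultimately show ?thesis using t0 unfolding y_def by (auto simp: axis_def)
        qed
        have yT: "y \<in> T" unfolding T_def using ys1 ys2 yle yge by blast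
        have "\<exists>j. j \<noteq> i \<and> y $ j \<noteq> 0"
        proof (rule ccontr)
          assume A: "\<not> (\<exists>j. j \<noteq> i \<and> y $ j \<noteq> 0)"
          have "ones \<bullet> y = y $ i + (\<Sum>l\<in>UNIV-{i}. y $ l)"
            unfolding ones_inner by (simp add: sum.remove)
          also have "(\<Sum>l\<in>UNIV-{i}. y $ l) = 0" using A by (intro sum.neutral) auto
          finally show False using ys1 yi by simp
        qed
        then obtain j where ji: "j \<noteq> i" and yj: "y $ j \<noteq> 0" by blast
        have "norm y ^ 2 = (\<Sum>l\<in>UNIV. (y $ l) ^ 2)"
          by (simp only: power2_norm_eq_inner) (simp add: inner_vec_def power2_eq_square)
        also have "\<dots> \<ge> (\<Sum>l\<in>{i,j}. (y $ l) ^ 2)" by (intro sum_mono2) auto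
        finally have n1: "norm y ^ 2 \<ge> y $ i ^ 2 + y $ j ^ 2" using ji by simp
        have n2: "y $ j ^ 2 > 0" using yj by simp
        have n3: "y $ i ^ 2 = 1" using yi by simp
        have "norm y ^ 2 > 1 ^ 2" unfolding power_one using n1 n2 n3 by linarith
        then have "norm y > 1" by (rule power_less_imp_less_base) simp
        then show False using Tle yT by fastforce
      qed
    qed
  qed
qed

end
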